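(* Let $P=\{x\in\mathbb R^n : Ax=b,\ x\ge 0\}$ be a polyhedron in standard form, and let $$P_A=\{(y^+,y^-)\in\mathbb R^{2n} : A(y^+-y^-)=0,\ \|y^+\|_1+\|y^-\|_1=1,\ y^+,y^-\ge 0\}.$$ Let $S:=\{(y^+,y^-) : y^+_i=\max\{g_i,0\},\ y^-_i=\max\{-g_i,0\}\ (i\le n),\ g\in\mathcal C(A)\}$ and $T:=\{(y^+,y^-) : \text{for some } i\le n,\ y^+_i=y^-_i=1,\ y^+_j=y^-_j=0\ (j\ne i)\}$. Then there is a subset $T'\subseteq T$ with $|T'|\le n$ such that $S\cup T'$ generates the extreme rays of the cone $\{(y^+,y^-): A(y^+-y^-)=0,\ y^\pm\ge0\}$, and the vertex set of $P_A$ is $S_1\cup T'_1$, where $S_1$ and $T'_1$ consist of the vectors $r/(\|y^+\|_1+\|y^-\|_1)$ for $r=(y^+,y^-)$ in $S$ and in $T'$ respectively.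
   Context: $\mathcal C(A)$ denotes the set of circuits of the standard form polyhedron: all $g\in\ker(A)\setminus\{0\}$, normalized to coprime integer components, that are support-minimal in $\ker(A)\setminus\{0\}$ (no $x\in\ker(A)\setminus\{0\}$ has $\operatorname{supp}(x)\subsetneq\operatorname{supp}(g)$). *)

theory Defs
  imports "HOL-Analysis.Analysis"
begin

definition supp :: "real^'n \<Rightarrow> 'n set" where
  "supp x = {i. x $ i \<noteq> 0}"

definition circuits :: "real^'n^'m \<Rightarrow> (real^'n) set" where
  "circuits A = {g. A *v g = 0 \<and> g \<noteq> 0
      \<and> (\<forall>i. g $ i \<in> \<int>)
      \<and> Gcd (range (\<lambda>i. \<lfloor>g $ i\<rfloor>)) = (1::int)
      \<and> \<not> (\<exists>x. A *v x = 0 \<and> x \<noteq> 0 \<and> supp x \<subset> supp g)}"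

definition l1norm2 :: "(real^'n) \<times> (real^'n) \<Rightarrow> real" where
  "l1norm2 r = (\<Sum>i\<in>UNIV. \<bar>fst r $ i\<bar>) + (\<Sum>i\<in>UNIV. \<bar>snd r $ i\<bar>)"

definition split_cone :: "real^'n^'m \<Rightarrow> ((real^'n) \<times> (real^'n)) set" where
  "split_cone A = {(yp, ym). A *v (yp - ym) = 0 \<and> (\<forall>i. 0 \<le> yp $ i \<and> 0 \<le> ym $ i)}"

definition P_A :: "real^'n^'m \<Rightarrow> ((real^'n) \<times> (real^'n)) set" where
  "P_A A = {(yp, ym). A *v (yp - ym) = 0 \<and> l1norm2 (yp, ym) = 1
              \<and> (\<forall>i. 0 \<le> yp $ i \<and> 0 \<le> ym $ i)}"

definition ray :: "'a::real_vector \<Rightarrow> 'a set" where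
  "ray r = {t *\<^sub>R r | t. 0 \<le> t}"

definition extreme_rays :: "'a::real_vector set \<Rightarrow> 'a set set" where
  "extreme_rays K = {R. R face_of K \<and> (\<exists>r. r \<noteq> 0 \<and> R = ray r)}"

definition S_set :: "real^'n^'m \<Rightarrow> ((real^'n) \<times> (real^'n)) set" where
  "S_set A = {((\<chi> i. max (g $ i) 0), (\<chi> i. max (- g $ i) 0)) | g. g \<in> circuits A}"

definition T_set :: "((real^'n) \<times> (real^'n)) set" where
  "T_set = {(axis i 1, axis i 1) | i. True}"

definition normalize_l1 :: "(real^'n) \<times> (real^'n) \<Rightarrow> (real^'n) \<times> (real^'n)" where
  "normalize_l1 r = (1 / l1norm2 r) *\<^sub>R r"

end

theory Submission
  imports Defs
begin

definition extdir :: "real^'n^'m \<Rightarrow> (real^'n) \<times> (real^'n) \<Rightarrow> bool" where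
  "extdir A r \<longleftrightarrow> r \<in> split_cone A \<and> r \<noteq> 0 \<and>
     (\<forall>u w. u \<in> split_cone A \<longrightarrow> w \<in> split_cone A \<longrightarrow> u + w = r \<longrightarrow> (\<exists>t\<ge>0. u = t *\<^sub>R r))"

lemma cone_mem: "(a,b) \<in> split_cone A \<longleftrightarrow> A *v (a - b) = 0 \<and> (\<forall>i. 0 \<le> a$i \<and> 0 \<le> b$i)"
  by (simp add: split_cone_def)

lemma cone_add: assumes "u \<in> split_cone A" "w \<in> split_cone A" shows "u + w \<in> split_cone A"
proof -
  obtain a b c d where u: "u = (a,b)" and w: "w = (c,d)" by (cases u, cases w)
  have eq: "(a + c) - (b + d) = (a - b) + (c - d)" by (simp add: algebra_simps)
  have "A *v ((a + c) - (b + d)) = A *v (a - b) + A *v (c - d)"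
    unfolding eq by (rule matrix_vector_right_distrib)
  then have "A *v ((a + c) - (b + d)) = 0" using assms unfolding u w cone_mem by simp
  then show ?thesis using assms unfolding u w by (simp add: cone_mem add_nonneg_nonneg)
qed

lemma cone_scale: assumes "u \<in> split_cone A" "0 \<le> t" shows "t *\<^sub>R u \<in> split_cone A"
proof -
  obtain a b where u: "u = (a,b)" by (cases u)
  have "t *\<^sub>R a - t *\<^sub>R b = t *\<^sub>R (a - b)" by (simp add: algebra_simps)
  then have "A *v (t *\<^sub>R a - t *\<^sub>R b) = 0" using assms unfolding u cone_mem
    by (simp add: matrix_vector_mult_scaleR)
  then show ?thesis using assms unfolding u by (simp add: cone_mem)
qed

lemma cone_pointed: assumes "u \<in> split_cone A" "w \<in> split_cone A" "u + w = 0" shows "u = 0"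
proof -
  obtain a b c d where u: "u = (a,b)" and w: "w = (c,d)" by (cases u, cases w)
  show ?thesis using assms unfolding u w cone_mem
    by (auto simp: vec_eq_iff zero_prod_def) (metis add_nonneg_eq_0_iff)+
qed

lemma ray_face:
  assumes "r \<noteq> 0"
  shows "ray r face_of split_cone A \<longleftrightarrow> extdir A r"
proof
  assume F: "ray r face_of split_cone A"
  have sub: "ray r \<subseteq> split_cone A" using F face_of_imp_subset by blast
  have rr: "r \<in> ray r" unfolding ray_def by (auto intro!: exI[of _ 1])
  show "extdir A r" unfolding extdir_def
  proof (intro conjI allI impI)
    show "r \<in> split_cone A" using sub rr by blast
    show "r \<noteq> 0" by fact
    fix u w assume uK: "u \<in> split_cone A" and wK: "w \<in> split_cone A" and uw: "u + w = r"
    show "\<exists>t\<ge>0. u = t *\<^sub>R r"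
    proof (cases "u = w")
      case True
      then have "r = 2 *\<^sub>R u" using uw by (simp add: scaleR_2)
      then have "u = (1/2) *\<^sub>R r" by simp
      then show ?thesis by (intro exI[of _ "1/2"]) auto
    next
      case False
      then have ne: "2 *\<^sub>R u \<noteq> 2 *\<^sub>R w" by simp
      have "r = midpoint (2 *\<^sub>R u) (2 *\<^sub>R w)" using uw by (simp add: midpoint_def algebra_simps)
      then have "r \<in> open_segment (2 *\<^sub>R u) (2 *\<^sub>R w)" using ne by (simp add: midpoint_in_open_segment)
      moreover have "2 *\<^sub>R u \<in> split_cone A" "2 *\<^sub>R w \<in> split_cone A" using cone_scale[OF uK] cone_scale[OF wK] by auto
      ultimately have "2 *\<^sub>R u \<in> ray r" using F rr unfolding face_of_def by blast
      then obtain t where t: "0 \<le> t" "2 *\<^sub>R u = t *\<^sub>R r" unfolding ray_def by auto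
      then have "u = (t/2) *\<^sub>R r"
        by (metis (no_types, lifting) divide_inverse_commute scaleR_scaleR zero_neq_numeral
            inverse_eq_divide scaleR_one divide_self_if times_divide_eq_right
            mult.commute real_vector.scale_left_imp_eq scaleR_2 )
      then show ?thesis using t by (intro exI[of _ "t/2"]) auto
    qed
  qed
next
  assume E: "extdir A r"
  then have rK: "r \<in> split_cone A" and ex: "\<And>u w. u \<in> split_cone A \<Longrightarrow> w \<in> split_cone A \<Longrightarrow> u + w = r \<Longrightarrow> (\<exists>t\<ge>0. u = t *\<^sub>R r)"
    unfolding extdir_def by blast+
  have key: "a \<in> ray r" if aK: "a \<in> split_cone A" and bK: "b \<in> split_cone A" and u: "0 < u" "u < 1"
    and eq: "(1 - u) *\<^sub>R a + u *\<^sub>R b = s *\<^sub>R r" and s: "0 \<le> s" for a b u s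
  proof (cases "s = 0")
    case True
    have "(1 - u) *\<^sub>R a = 0"
      by (rule cone_pointed[of _ A "u *\<^sub>R b"]) (use aK bK u eq True in \<open>auto intro: cone_scale\<close>)
    then have "a = 0" using u by simp
    then show ?thesis unfolding ray_def by (auto intro!: exI[of _ 0])
  next
    case False
    then have sp: "s > 0" using s by simp
    have "((1 - u)/s) *\<^sub>R a + (u/s) *\<^sub>R b = r"
    proof -
      have "((1 - u)/s) *\<^sub>R a + (u/s) *\<^sub>R b = (1/s) *\<^sub>R ((1 - u) *\<^sub>R a + u *\<^sub>R b)"
        by (simp add: scaleR_add_right)
      also have "\<dots> = r" using eq sp by simp
      finally show ?thesis .
    qed
    moreover have "((1 - u)/s) *\<^sub>R a \<in> split_cone A" "(u/s) *\<^sub>R b \<in> split_cone A"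
      using aK bK u sp by (auto intro: cone_scale)
    ultimately obtain t where t: "0 \<le> t" "((1 - u)/s) *\<^sub>R a = t *\<^sub>R r" using ex by blast
    then have "a = (t * s / (1 - u)) *\<^sub>R r"
    proof -
      have "a = (s/(1-u)) *\<^sub>R (((1 - u)/s) *\<^sub>R a)" using u sp by simp
      also have "\<dots> = (t * s / (1 - u)) *\<^sub>R r" using t by simp
      finally show ?thesis .
    qed
    then show ?thesis unfolding ray_def using t u sp by (auto intro!: exI[of _ "t * s / (1 - u)"])
  qed
  show "ray r face_of split_cone A" unfolding face_of_def
  proof (intro conjI ballI impI)
    show "ray r \<subseteq> split_cone A" unfolding ray_def using rK by (auto intro: cone_scale)
    show "convex (ray r)"
    proof (rule convexI)
      fix x y and u v :: real
      assume "x \<in> ray r" "y \<in> ray r" "0 \<le> u" "0 \<le> v" "u + v = 1"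
      then obtain a b where "0 \<le> a" "x = a *\<^sub>R r" "0 \<le> b" "y = b *\<^sub>R r" "0 \<le> u" "0 \<le> v"
        unfolding ray_def by auto
      then show "u *\<^sub>R x + v *\<^sub>R y \<in> ray r" unfolding ray_def
        by (intro CollectI exI[of _ "u * a + v * b"]) (auto simp: algebra_simps)
    qed
    fix a b x assume aK: "a \<in> split_cone A" and bK: "b \<in> split_cone A" and x: "x \<in> ray r"
      and seg: "x \<in> open_segment a b"
    obtain s where s: "0 \<le> s" "x = s *\<^sub>R r" using x unfolding ray_def by auto
    obtain u where u: "0 < u" "u < 1" "x = (1 - u) *\<^sub>R a + u *\<^sub>R b" using seg by (auto simp: in_segment)
    show "a \<in> ray r" using key[OF aK bK u(1,2) _ s(1)] u s by simp
    have "(1 - (1 - u)) *\<^sub>R b + (1 - u) *\<^sub>R a = s *\<^sub>R r" using u s by (simp add: add.commute)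
    then show "b \<in> ray r" using key[OF bK aK _ _ _ s(1), of "1 - u"] u by simp
  qed
qed

lemma extreme_rays_eq: "extreme_rays (split_cone A) = {ray r | r. extdir A r}"
  unfolding extreme_rays_def using ray_face extdir_def by blast

lemma supp_scale: "c \<noteq> 0 \<Longrightarrow> supp (c *\<^sub>R x) = supp x"
  by (simp add: supp_def)

lemma min_prop:
  fixes A :: "real^'n^'m"
  assumes g0: "A *v g = 0" "g \<noteq> 0" and gm: "\<not> (\<exists>x. A *v x = 0 \<and> x \<noteq> 0 \<and> supp x \<subset> supp g)"
    and x: "A *v x = 0" "supp x \<subseteq> supp g"
  shows "\<exists>c. x = c *\<^sub>R g"
proof -
  obtain j where j: "g $ j \<noteq> 0" using g0(2) by (auto simp: vec_eq_iff)
  define y where "y = x - (x $ j / g $ j) *\<^sub>R g"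
  have Ay: "A *v y = 0" unfolding y_def using g0 x by (simp add: matrix_vector_mult_diff_distrib matrix_vector_mult_scaleR)
  have "supp y \<subseteq> supp g" using x(2) unfolding y_def supp_def by auto
  moreover have "j \<notin> supp y" "j \<in> supp g" using j unfolding y_def supp_def by auto
  ultimately have "supp y \<subset> supp g" by blast
  then have "y = 0" using gm Ay by blast
  then show ?thesis unfolding y_def by (intro exI[of _ "x $ j / g $ j"]) simp
qed

lemma extdir_scale: assumes "extdir A r" "0 < c" shows "extdir A (c *\<^sub>R r)"
  unfolding extdir_def
proof (intro conjI allI impI)
  show "c *\<^sub>R r \<in> split_cone A" using assms by (auto simp: extdir_def intro: cone_scale)
  show "c *\<^sub>R r \<noteq> 0" using assms by (auto simp: extdir_def)
  fix u w assume "u \<in> split_cone A" "w \<in> split_cone A" "u + w = c *\<^sub>R r"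
  then have "(1/c) *\<^sub>R u \<in> split_cone A" "(1/c) *\<^sub>R w \<in> split_cone A" "(1/c) *\<^sub>R u + (1/c) *\<^sub>R w = r"
    using assms(2) by (auto intro: cone_scale simp: scaleR_add_right[symmetric])
  then obtain t where "t \<ge> 0" "(1/c) *\<^sub>R u = t *\<^sub>R r" using assms(1) unfolding extdir_def by blast
  then have "u = t *\<^sub>R (c *\<^sub>R r)" "t \<ge> 0"
  proof -
    have "u = c *\<^sub>R ((1/c) *\<^sub>R u)" using assms(2) by simp
    also have "\<dots> = t *\<^sub>R (c *\<^sub>R r)" using \<open>(1/c) *\<^sub>R u = t *\<^sub>R r\<close> by (simp add: mult.commute)
    finally show "u = t *\<^sub>R (c *\<^sub>R r)" .
  qed (use \<open>t \<ge> 0\<close> in simp)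
  then show "\<exists>t\<ge>0. u = t *\<^sub>R c *\<^sub>R r" by blast
qed

lemma ray_scale: "0 < c \<Longrightarrow> ray (c *\<^sub>R r) = ray r"
  unfolding ray_def
proof safe
  fix t :: real assume "0 < c" "0 \<le> t"
  then show "\<exists>s. t *\<^sub>R c *\<^sub>R r = s *\<^sub>R r \<and> 0 \<le> s" by (intro exI[of _ "t * c"]) auto
next
  fix t :: real assume "0 < c" "0 \<le> t"
  then show "\<exists>s. t *\<^sub>R r = s *\<^sub>R c *\<^sub>R r \<and> 0 \<le> s" by (intro exI[of _ "t / c"]) auto
qed

lemma extdir_axis:
  fixes A :: "real^'n^'m"
  assumes nz: "A *v axis i 1 \<noteq> 0"
  shows "extdir A (axis i 1, axis i 1)"
  unfolding extdir_def
proof (intro conjI allI impI)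
  show "(axis i 1, axis i 1) \<in> split_cone A" by (simp add: cone_mem axis_def)
  show "(axis i 1, axis i (1::real)) \<noteq> 0" by (simp add: zero_prod_def axis_eq_0_iff)
  fix u w assume uK: "u \<in> split_cone A" and wK: "w \<in> split_cone A" and uw: "u + w = (axis i 1, axis i 1)"
  obtain p q p' q' where u: "u = (p,q)" and w: "w = (p',q')" by (cases u, cases w)
  have nn: "\<forall>j. 0 \<le> p$j \<and> 0 \<le> q$j \<and> 0 \<le> p'$j \<and> 0 \<le> q'$j" and Apq: "A *v (p - q) = 0"
    using uK wK unfolding u w cone_mem by auto
  have s: "p + p' = axis i 1" "q + q' = axis i 1" using uw unfolding u w by auto
  have pe: "p = p $ i *\<^sub>R axis i 1"
  unfolding vec_eq_iff
  proof
    fix j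
    have "(p + p') $ j = axis i 1 $ j" using s(1) by simp
    then have "p $ j + p' $ j = (if j = i then 1 else 0)" by (simp add: axis_def)
    then show "p $ j = (p $ i *\<^sub>R axis i 1) $ j" using nn[rule_format, of j] by (auto simp: axis_def)
  qed
  have qe: "q = q $ i *\<^sub>R axis i 1"
  unfolding vec_eq_iff
  proof
    fix j
    have "(q + q') $ j = axis i 1 $ j" using s(2) by simp
    then have "q $ j + q' $ j = (if j = i then 1 else 0)" by (simp add: axis_def)
    then show "q $ j = (q $ i *\<^sub>R axis i 1) $ j" using nn[rule_format, of j] by (auto simp: axis_def)
  qed
  have "p - q = (p $ i - q $ i) *\<^sub>R axis i 1" using pe qe by (metis scaleR_left_diff_distrib)
  then have "(p $ i - q $ i) *\<^sub>R (A *v axis i 1) = 0" using Apq by (simp add: matrix_vector_mult_scaleR)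
  then have "p $ i = q $ i" using nz by simp
  then have "u = p $ i *\<^sub>R (axis i 1, axis i 1)" unfolding u using pe qe by simp
  then show "\<exists>t\<ge>0. u = t *\<^sub>R (axis i 1, axis i 1)" using nn by blast
qed

definition pos_part :: "real^'n \<Rightarrow> real^'n" where "pos_part g = (\<chi> i. max (g $ i) 0)"
definition neg_part :: "real^'n \<Rightarrow> real^'n" where "neg_part g = (\<chi> i. max (- g $ i) 0)"

lemma pos_neg_diff: "pos_part g - neg_part g = g"
  by (auto simp: pos_part_def neg_part_def vec_eq_iff max_def)

lemma comp_aux:
  fixes p q p' q' gk c :: real
  assumes "0 \<le> p" "0 \<le> q" "0 \<le> p'" "0 \<le> q'" "p + p' = max gk 0" "q + q' = max (-gk) 0"
    "p - q = c * gk" "0 \<le> c"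
  shows "p = c * max gk 0 \<and> q = c * max (-gk) 0"
proof (cases "gk > 0")
  case True
  then have "q = 0" using assms by (simp add: max_def)
  then show ?thesis using assms True by (simp add: max_def)
next
  case False
  then have "p = 0" using assms by (simp add: max_def)
  show ?thesis
  proof (cases "gk = 0")
    case True
    then have "q = 0" using assms by simp
    then show ?thesis using \<open>p = 0\<close> True by simp
  next
    case F2: False
    then show ?thesis using assms False \<open>p = 0\<close> by (simp add: max_def)
  qed
qed

lemma extdir_circuit:
  fixes A :: "real^'n^'m"
  assumes g0: "A *v g = 0" "g \<noteq> 0" and gm: "\<not> (\<exists>x. A *v x = 0 \<and> x \<noteq> 0 \<and> supp x \<subset> supp g)"
  shows "extdir A (pos_part g, neg_part g)"
  unfolding extdir_def
proof (intro conjI allI impI)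
  show "(pos_part g, neg_part g) \<in> split_cone A" using g0 by (simp add: cone_mem pos_neg_diff) (simp add: pos_part_def neg_part_def)
  show "(pos_part g, neg_part g) \<noteq> 0" using g0(2) pos_neg_diff[of g] by (auto simp: zero_prod_def)
  fix u w assume uK: "u \<in> split_cone A" and wK: "w \<in> split_cone A" and uw: "u + w = (pos_part g, neg_part g)"
  obtain p q p' q' where u: "u = (p,q)" and w: "w = (p',q')" by (cases u, cases w)
  have nn: "\<forall>j. 0 \<le> p$j \<and> 0 \<le> q$j \<and> 0 \<le> p'$j \<and> 0 \<le> q'$j" and Apq: "A *v (p - q) = 0"
    using uK wK unfolding u w cone_mem by auto
  have s: "\<And>j. p $ j + p' $ j = max (g $ j) 0" "\<And>j. q $ j + q' $ j = max (- g $ j) 0"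
    using uw unfolding u w pos_part_def neg_part_def by (auto simp: vec_eq_iff)
  have "supp (p - q) \<subseteq> supp g"
  proof
    fix j assume "j \<in> supp (p - q)"
    then show "j \<in> supp g" using s[of j] nn[rule_format, of j] unfolding supp_def by auto
  qed
  then obtain c where c: "p - q = c *\<^sub>R g" using min_prop[OF g0 gm Apq] by blast
  have cj: "p $ j - q $ j = c * g $ j" for j
  proof -
    have "(p - q) $ j = (c *\<^sub>R g) $ j" using c by simp
    then show ?thesis by simp
  qed
  obtain j where j: "g $ j \<noteq> 0" using g0(2) by (auto simp: vec_eq_iff)
  have c0: "c \<ge> 0"
  proof (cases "g $ j > 0")
    case True
    then have "q $ j = 0" using s(2)[of j] nn[rule_format, of j] by auto
    then show ?thesis using cj[of j] True nn[rule_format, of j] by (simp add: zero_le_mult_iff)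
  next
    case False
    then have "p $ j = 0" "g $ j < 0" using s(1)[of j] nn[rule_format, of j] j by auto
    then have "c * g $ j \<le> 0" "g $ j < 0" using cj[of j] nn[rule_format, of j] by auto
    then show ?thesis by (simp add: mult_le_0_iff)
  qed
  have "p = c *\<^sub>R pos_part g"
  unfolding vec_eq_iff
  proof
    fix k show "p $ k = (c *\<^sub>R pos_part g) $ k"
      using comp_aux[of "p$k" "q$k" "p'$k" "q'$k" "g$k" c] s(1)[of k] s(2)[of k] cj[of k] nn c0
      unfolding pos_part_def by simp
  qed
  moreover have "q = c *\<^sub>R neg_part g"
  unfolding vec_eq_iff
  proof
    fix k show "q $ k = (c *\<^sub>R neg_part g) $ k"
      using comp_aux[of "p$k" "q$k" "p'$k" "q'$k" "g$k" c] s(1)[of k] s(2)[of k] cj[of k] nn c0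
      unfolding neg_part_def by simp
  qed
  ultimately show "\<exists>t\<ge>0. u = t *\<^sub>R (pos_part g, neg_part g)" using c0 unfolding u by auto
qed

lemma rat_functional:
  fixes a :: real assumes "a \<noteq> 0"
  shows "\<exists>\<phi>::real\<Rightarrow>rat. (\<forall>x y. \<phi> (x+y) = \<phi> x + \<phi> y) \<and> (\<forall>q x. \<phi> (of_rat q * x) = q * \<phi> x) \<and> \<phi> a = 1
     \<and> (\<forall>(f::'a \<Rightarrow> real) F. \<phi> (sum f F) = (\<Sum>i\<in>F. \<phi> (f i)))"
proof -
  interpret vs1: vector_space "\<lambda>q::rat. \<lambda>r::real. of_rat q * r"
    by unfold_locales (auto simp: algebra_simps of_rat_add of_rat_mult)
  interpret vs2: vector_space "\<lambda>q::rat. \<lambda>r::rat. q * r"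
    by unfold_locales (auto simp: algebra_simps)
  interpret vector_space_pair "\<lambda>q::rat. \<lambda>r::real. of_rat q * r" "\<lambda>q::rat. \<lambda>r::rat. q * r" ..
  have "vs1.independent {a}"
    using assms by (simp add: vs1.independent_insert vs1.span_empty)
  from linear_independent_extend[OF this, of "\<lambda>_. 1"] obtain g where
    g: "Vector_Spaces.linear (\<lambda>q::rat. \<lambda>r::real. of_rat q * r) (\<lambda>q::rat. \<lambda>r::rat. q * r) g" "g a = 1" by auto
  then interpret l: Vector_Spaces.linear "\<lambda>q::rat. \<lambda>r::real. of_rat q * r" "\<lambda>q::rat. \<lambda>r::rat. q * r" g by simp
  show ?thesis using g l.add l.scale l.sum by auto
qed

lemma rat_to_int:
  fixes y :: "real^'n"
  assumes "\<forall>i. y $ i \<in> \<rat>"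
  shows "\<exists>D>0. \<exists>k. D *\<^sub>R y = (\<chi> i. of_int (k i))"
proof -
  have "\<forall>i. \<exists>m n. n \<noteq> 0 \<and> y $ i = of_int m / real n" using assms Rats_eq_int_div_nat by blast
  then obtain m n where mn: "\<And>i. n i \<noteq> 0 \<and> y $ i = of_int (m i) / real (n i)" by metis
  define D where "D = (\<Prod>i\<in>UNIV. real (n i))"
  have Dp: "D > 0" unfolding D_def using mn by (intro prod_pos) auto
  define k where "k i = m i * int (\<Prod>j\<in>UNIV - {i}. n j)" for i
  have "D * y $ i = of_int (k i)" for i
  proof -
    have "D = real (n i) * (\<Prod>j\<in>UNIV - {i}. real (n j))" unfolding D_def
      by (simp add: prod.remove)
    then have "D * y $ i = of_int (m i) * (\<Prod>j\<in>UNIV - {i}. real (n j))"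
      using mn[of i] by simp
    also have "\<dots> = of_int (k i)" unfolding k_def by simp
    finally show ?thesis .
  qed
  then have "D *\<^sub>R y = (\<chi> i. of_int (k i))" by (simp add: vec_eq_iff)
  then show ?thesis using Dp by blast
qed

lemma gcd_normalize:
  fixes k :: "'n::finite \<Rightarrow> int"
  assumes "k i0 \<noteq> 0"
  shows "\<exists>G>0. \<exists>k'. (\<forall>i. k i = G * k' i) \<and> Gcd (range k') = 1"
proof -
  define G where "G = Gcd (range k)"
  have G0: "G \<noteq> 0" unfolding G_def using assms by auto
  have Gp: "G > 0" using G0 Gcd_int_greater_eq_0 unfolding G_def by (metis order_le_less)
  define k' where "k' i = k i div G" for i
  have kk: "k i = G * k' i" for i unfolding k'_def G_def by simp
  have "range k = (*) G ` range k'" using kk by auto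
  then have "G = normalize (G * Gcd (range k'))" unfolding G_def using Gcd_mult by metis
  also have "\<dots> = G * Gcd (range k')" using Gp Gcd_int_greater_eq_0 by (simp add: abs_mult)
  finally have "Gcd (range k') = 1" using G0 by simp
  then show ?thesis using Gp kk by blast
qed

lemma circuit_of:
  fixes A :: "real^'n^'m"
  assumes x: "A *v x = 0" "x \<noteq> 0" and xm: "\<not> (\<exists>z. A *v z = 0 \<and> z \<noteq> 0 \<and> supp z \<subset> supp x)"
    and e: "e \<noteq> 0" and g: "(\<chi> i. of_int (h i)) = e *\<^sub>R x" and gcd: "Gcd (range h) = 1"
  shows "(\<chi> i. of_int (h i)) \<in> circuits A"
proof -
  have "range (\<lambda>i. \<lfloor>(\<chi> i. (of_int (h i) :: real)) $ i\<rfloor>) = range h" by simp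
  moreover have "supp (\<chi> i. (of_int (h i) :: real)) = supp x" unfolding g using e by (rule supp_scale)
  moreover have "A *v (\<chi> i. of_int (h i)) = 0" unfolding g using x by (simp add: matrix_vector_mult_scaleR)
  moreover have "(\<chi> i. (of_int (h i) :: real)) \<noteq> 0" unfolding g using x e by simp
  ultimately show ?thesis unfolding circuits_def using xm gcd by auto
qed

lemma int_circuit:
  fixes A :: "real^'n^'m"
  assumes rat: "\<forall>i j. A $ i $ j \<in> \<rat>" and x: "A *v x = 0" "x \<noteq> 0"
    and xm: "\<not> (\<exists>z. A *v z = 0 \<and> z \<noteq> 0 \<and> supp z \<subset> supp x)"
  shows "\<exists>g\<in>circuits A. \<exists>c>0. x = c *\<^sub>R g"
proof -
  obtain j where j: "x $ j \<noteq> 0" using x(2) by (auto simp: vec_eq_iff)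
  obtain \<phi> :: "real \<Rightarrow> rat" where add: "\<And>a b. \<phi> (a + b) = \<phi> a + \<phi> b"
    and sc: "\<And>q a. \<phi> (of_rat q * a) = q * \<phi> a" and one: "\<phi> (x $ j) = 1"
    and sm: "\<And>(f::'n \<Rightarrow> real) F. \<phi> (sum f F) = (\<Sum>i\<in>F. \<phi> (f i))"
    using rat_functional[OF j] by blast
  have phi0: "\<phi> 0 = 0" using add[of 0 0] by simp
  obtain a where a: "\<And>k i. A $ k $ i = of_rat (a k i)"
  proof -
    have "\<forall>k i. \<exists>q. A $ k $ i = of_rat q" using rat Rats_cases by metis
    then show ?thesis using that by metis
  qed
  define y :: "real^'n" where "y = (\<chi> i. of_rat (\<phi> (x $ i)))"
  have Ay: "A *v y = 0"
  proof -
    have "(A *v y) $ k = 0" for k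
    proof -
      have "(A *v y) $ k = (\<Sum>i\<in>UNIV. of_rat (a k i) * of_rat (\<phi> (x $ i)))"
        unfolding y_def by (simp add: matrix_vector_mult_def a)
      also have "\<dots> = of_rat (\<Sum>i\<in>UNIV. \<phi> (of_rat (a k i) * x $ i))"
        by (simp add: sc of_rat_sum of_rat_mult)
      also have "\<dots> = of_rat (\<phi> ((A *v x) $ k))"
        by (simp add: sm matrix_vector_mult_def a)
      also have "\<dots> = 0" using x(1) phi0 by simp
      finally show ?thesis .
    qed
    then show ?thesis by (simp add: vec_eq_iff)
  qed
  have "supp y \<subseteq> supp x" unfolding supp_def y_def using phi0 by auto
  then obtain c where c: "y = c *\<^sub>R x" using min_prop[OF x xm Ay] by blast
  have yj: "y $ j = 1" unfolding y_def using one by simp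
  then have c0: "c \<noteq> 0" using c by auto
  have yr: "\<forall>i. y $ i \<in> \<rat>" unfolding y_def by simp
  obtain D k where D: "D > 0" "D *\<^sub>R y = (\<chi> i. of_int (k i))" using rat_to_int[OF yr] by blast
  have "k j \<noteq> 0"
  proof -
    have "(D *\<^sub>R y) $ j = (\<chi> i. (of_int (k i) :: real)) $ j" using D(2) by simp
    then have "of_int (k j) = D * y $ j" by simp
    then show ?thesis using yj D(1) by auto
  qed
  then obtain G k' where G: "G > 0" "\<And>i. k i = G * k' i" and gcd: "Gcd (range k') = 1"
    using gcd_normalize by blast
  define e where "e = D * c / of_int G"
  have e0: "e \<noteq> 0" unfolding e_def using D c0 G by simp
  have ge: "(\<chi> i. of_int (k' i)) = e *\<^sub>R x"
  proof -
    have "(\<chi> i. of_int (k' i)) = (1 / of_int G) *\<^sub>R (\<chi> i. (of_int (k i) :: real))"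
      using G by (simp add: vec_eq_iff)
    also have "\<dots> = (1 / of_int G) *\<^sub>R (D *\<^sub>R (c *\<^sub>R x))" using D(2) c by simp
    also have "\<dots> = e *\<^sub>R x" unfolding e_def by simp
    finally show ?thesis .
  qed
  show ?thesis
  proof (cases "e > 0")
    case True
    have "(\<chi> i. of_int (k' i)) \<in> circuits A" by (rule circuit_of[OF x xm e0 ge gcd])
    moreover have "x = (1 / e) *\<^sub>R (\<chi> i. of_int (k' i))" using ge True by simp
    ultimately show ?thesis using True by (intro bexI[of _ "\<chi> i. of_int (k' i)"] exI[of _ "1/e"]) auto
  next
    case False
    then have en: "-e > 0" using e0 by simp
    have ge': "(\<chi> i. of_int (- k' i)) = (-e) *\<^sub>R x" using ge by (simp add: vec_eq_iff)
    have "range (\<lambda>i. - k' i) = (*) (-1) ` range k'" by auto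
    then have gcd': "Gcd (range (\<lambda>i. - k' i)) = 1" using gcd by (simp add: Gcd_mult)
    have "(\<chi> i. of_int (- k' i)) \<in> circuits A"
      by (rule circuit_of[OF x xm _ ge' gcd']) (use e0 in simp)
    moreover have "x = (1 / (-e)) *\<^sub>R (\<chi> i. of_int (- k' i))" using ge' en by simp
    ultimately show ?thesis using en by (intro bexI[of _ "\<chi> i. of_int (- k' i)"] exI[of _ "1/(-e)"]) auto
  qed
qed

lemma max_aux:
  fixes a d :: real
  assumes "\<bar>d\<bar> < \<bar>a\<bar> \<or> (a = 0 \<and> d = 0)"
  shows "max (a - d) 0 + max (a + d) 0 = 2 * max a 0 \<and> max (- (a - d)) 0 + max (- (a + d)) 0 = 2 * max (- a) 0"
  using assms by (auto simp: max_def abs_if split: if_splits)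

lemma max_aux2:
  fixes a d :: real
  assumes "\<bar>d\<bar> < \<bar>a\<bar> \<or> (a = 0 \<and> d = 0)"
  shows "max (a - d) 0 / 2 + max (a + d) 0 / 2 = max a 0 \<and> max (d - a) 0 / 2 + max (- a - d) 0 / 2 = max (- a) 0"
  using max_aux[OF assms] by (auto simp: max_def abs_if split: if_splits)

lemma pn_aux:
  fixes a b :: real assumes "0 \<le> a" "0 \<le> b" "a = 0 \<or> b = 0"
  shows "max (a - b) 0 = a \<and> max (- (a - b)) 0 = b"
  using assms by (auto simp: max_def)

lemma pos_part_scale: "0 < c \<Longrightarrow> pos_part (c *\<^sub>R g) = c *\<^sub>R pos_part g"
  by (auto simp: pos_part_def vec_eq_iff max_def mult_le_0_iff zero_le_mult_iff)
lemma neg_part_scale: "0 < c \<Longrightarrow> neg_part (c *\<^sub>R g) = c *\<^sub>R neg_part g"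
  by (auto simp: neg_part_def vec_eq_iff max_def mult_le_0_iff zero_le_mult_iff)

lemma pn_cone: "A *v x = 0 \<Longrightarrow> (pos_part x, neg_part x) \<in> split_cone A"
  by (simp add: cone_mem pos_neg_diff) (simp add: pos_part_def neg_part_def)

lemma extdir_cases:
  fixes A :: "real^'n^'m"
  assumes rat: "\<forall>i j. A $ i $ j \<in> \<rat>" and E: "extdir A r"
  shows "\<exists>c>0. (\<exists>g\<in>circuits A. r = c *\<^sub>R (pos_part g, neg_part g))
                \<or> (\<exists>i. A *v axis i 1 \<noteq> 0 \<and> r = c *\<^sub>R (axis i 1, axis i 1))"
proof -
  obtain p q where r: "r = (p, q)" by (cases r)
  have rK: "r \<in> split_cone A" and r0: "r \<noteq> 0"
    and ex: "\<And>u w. u \<in> split_cone A \<Longrightarrow> w \<in> split_cone A \<Longrightarrow> u + w = r \<Longrightarrow> (\<exists>t\<ge>0. u = t *\<^sub>R r)"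
    using E unfolding extdir_def by blast+
  have nn: "\<forall>j. 0 \<le> p$j \<and> 0 \<le> q$j" and Apq: "A *v (p - q) = 0" using rK unfolding r cone_mem by auto
  show ?thesis
  proof (cases "\<exists>i. p $ i > 0 \<and> q $ i > 0")
    case True
    then obtain i where i: "p $ i > 0" "q $ i > 0" by blast
    define e :: "real^'n" where "e = axis i 1"
    have e0: "e \<noteq> 0" unfolding e_def by (simp add: axis_eq_0_iff)
    define cc where "cc = min (p $ i) (q $ i)"
    have cc: "cc > 0" "cc \<le> p $ i" "cc \<le> q $ i" using i unfolding cc_def by auto
    define w where "w = cc *\<^sub>R (e, e)"
    have eK: "(e, e) \<in> split_cone A" unfolding e_def by (simp add: cone_mem axis_def)
    have wK: "w \<in> split_cone A" unfolding w_def using cone_scale[OF eK] cc by simp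
    have uK: "r - w \<in> split_cone A"
    proof -
      have "(p - cc *\<^sub>R e) - (q - cc *\<^sub>R e) = p - q" by simp
      moreover have "\<forall>j. 0 \<le> (p - cc *\<^sub>R e) $ j \<and> 0 \<le> (q - cc *\<^sub>R e) $ j"
        using nn cc unfolding e_def by (auto simp: axis_def)
      ultimately show ?thesis using Apq unfolding r w_def by (simp add: cone_mem)
    qed
    have "w + (r - w) = r" by simp
    then obtain t where t: "t \<ge> 0" "w = t *\<^sub>R r" using ex[OF wK uK] by blast
    have w0: "w \<noteq> 0" unfolding w_def using cc e0 by (simp add: zero_prod_def)
    then have tp: "t > 0" using t by (cases "t = 0") auto
    define s where "s = cc / t"
    have sp: "s > 0" unfolding s_def using cc tp by simp
    have rs: "r = s *\<^sub>R (e, e)"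
    proof -
      have "r = (1/t) *\<^sub>R w" using t tp by simp
      then show ?thesis unfolding w_def s_def by simp
    qed
    have Ae: "A *v e \<noteq> 0"
    proof
      assume Ae0: "A *v e = 0"
      have nne: "\<forall>j. 0 \<le> e $ j" unfolding e_def by (simp add: axis_def)
      have m: "A *v (- (s *\<^sub>R e)) = 0"
      proof -
        have "A *v ((-s) *\<^sub>R e) = 0" using Ae0 by (simp only: matrix_vector_mult_scaleR) simp
        then show ?thesis by (simp only: scaleR_minus_left)
      qed
      have "(s *\<^sub>R e, 0) \<in> split_cone A" "(0, s *\<^sub>R e) \<in> split_cone A"
        using Ae0 nne sp m by (simp_all add: cone_mem matrix_vector_mult_scaleR)
      moreover have "(s *\<^sub>R e, 0) + (0, s *\<^sub>R e) = r" using rs by simp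
      ultimately obtain t' where "(s *\<^sub>R e, 0) = t' *\<^sub>R r" using ex by blast
      then have "s *\<^sub>R e = t' *\<^sub>R (s *\<^sub>R e)" "0 = t' *\<^sub>R (s *\<^sub>R e)" using rs by auto
      then show False using sp e0 by auto
    qed
    show ?thesis using sp rs Ae unfolding e_def by blast
  next
    case False
    then have disj: "\<And>j. p $ j = 0 \<or> q $ j = 0" using nn by (metis order_le_less)
    define x where "x = p - q"
    have px: "p = pos_part x" and qx: "q = neg_part x"
      unfolding x_def pos_part_def neg_part_def vec_eq_iff
      using pn_aux[of "p $ j" "q $ j" for j] disj nn by simp_all
    have Ax: "A *v x = 0" using Apq unfolding x_def .
    have x0: "x \<noteq> 0"
    proof
      assume "x = 0"
      then have "p = 0" "q = 0" using px qx by (simp_all add: pos_part_def neg_part_def vec_eq_iff)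
      then show False using r0 r by (simp add: zero_prod_def)
    qed
    have xm: "\<not> (\<exists>z. A *v z = 0 \<and> z \<noteq> 0 \<and> supp z \<subset> supp x)"
    proof
      assume "\<exists>z. A *v z = 0 \<and> z \<noteq> 0 \<and> supp z \<subset> supp x"
      then obtain z where z: "A *v z = 0" "z \<noteq> 0" "supp z \<subset> supp x" by blast
      have fin: "finite (supp x)" by simp
      have ne: "supp x \<noteq> {}" using x0 by (auto simp: supp_def vec_eq_iff)
      define \<epsilon> where "\<epsilon> = Min ((\<lambda>i. \<bar>x $ i\<bar> / (\<bar>z $ i\<bar> + 1)) ` supp x)"
      have epos: "\<epsilon> > 0" unfolding \<epsilon>_def using fin ne by (auto simp: supp_def)
      have small: "\<bar>\<epsilon> * z $ i\<bar> < \<bar>x $ i\<bar> \<or> (x $ i = 0 \<and> \<epsilon> * z $ i = 0)" for i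
      proof (cases "i \<in> supp x")
        case True
        then have "\<epsilon> \<le> \<bar>x $ i\<bar> / (\<bar>z $ i\<bar> + 1)" unfolding \<epsilon>_def using fin by simp
        then have "\<epsilon> * (\<bar>z $ i\<bar> + 1) \<le> \<bar>x $ i\<bar>" by (simp add: le_divide_eq add_pos_nonneg)
        then have "\<bar>\<epsilon> * z $ i\<bar> < \<bar>x $ i\<bar>" using epos by (simp add: abs_mult algebra_simps)
        then show ?thesis by simp
      next
        case False
        then have "z $ i = 0" using z(3) unfolding supp_def by auto
        then show ?thesis using False unfolding supp_def by simp
      qed
      define u where "u = (pos_part (x - \<epsilon> *\<^sub>R z), neg_part (x - \<epsilon> *\<^sub>R z))"
      define w where "w = (pos_part (x + \<epsilon> *\<^sub>R z), neg_part (x + \<epsilon> *\<^sub>R z))"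
      have uK: "(1/2) *\<^sub>R u \<in> split_cone A" unfolding u_def
        by (rule cone_scale[OF pn_cone]) (simp_all add: Ax z(1) matrix_vector_mult_diff_distrib matrix_vector_mult_scaleR)
      have wK: "(1/2) *\<^sub>R w \<in> split_cone A" unfolding w_def
        by (rule cone_scale[OF pn_cone]) (simp_all add: Ax z(1) matrix_vector_right_distrib matrix_vector_mult_scaleR)
      have "(1/2) *\<^sub>R u + (1/2) *\<^sub>R w = r"
        unfolding u_def w_def r px qx
        using max_aux2[OF small] by (simp add: pos_part_def neg_part_def vec_eq_iff)
      then obtain t where t: "(1/2) *\<^sub>R u = t *\<^sub>R r" using ex[OF uK wK] by blast
      have "(1/2) *\<^sub>R (x - \<epsilon> *\<^sub>R z) = t *\<^sub>R x"
      proof -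
        have "fst ((1/2) *\<^sub>R u) - snd ((1/2) *\<^sub>R u) = fst (t *\<^sub>R r) - snd (t *\<^sub>R r)" using t by simp
        then show ?thesis unfolding u_def r
          by (simp add: scaleR_diff_right[symmetric] pos_neg_diff x_def)
      qed
      then have "2 *\<^sub>R ((1/2) *\<^sub>R (x - \<epsilon> *\<^sub>R z)) = 2 *\<^sub>R (t *\<^sub>R x)" by simp
      then have h2: "x - \<epsilon> *\<^sub>R z = (2 * t) *\<^sub>R x" by simp
      have "\<epsilon> *\<^sub>R z = x - (x - \<epsilon> *\<^sub>R z)" by simp
      also have "\<dots> = x - (2 * t) *\<^sub>R x" using h2 by simp
      also have "\<dots> = (1 - 2 * t) *\<^sub>R x" by (simp add: scaleR_diff_left)
      finally have "\<epsilon> *\<^sub>R z = (1 - 2 * t) *\<^sub>R x" .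
      then have zz: "z = ((1 - 2 * t) / \<epsilon>) *\<^sub>R x" using epos
        by (metis (no_types, lifting) divide_inverse_commute less_irrefl scaleR_scaleR
            inverse_eq_divide mult.commute scaleR_one divide_self_if times_divide_eq_right)
      then have "(1 - 2 * t) / \<epsilon> \<noteq> 0" using z(2) by auto
      then have "supp z = supp x" using zz supp_scale by metis
      then show False using z(3) by blast
    qed
    obtain g c where g: "g \<in> circuits A" "c > 0" "x = c *\<^sub>R g" using int_circuit[OF rat Ax x0 xm] by blast
    have "r = c *\<^sub>R (pos_part g, neg_part g)"
      unfolding r px qx g(3) by (simp add: pos_part_scale neg_part_scale g(2))
    then show ?thesis using g by blast
  qed
qed

lemma l1_cone: "u \<in> split_cone A \<Longrightarrow> l1norm2 u = (\<Sum>i\<in>UNIV. fst u $ i) + (\<Sum>i\<in>UNIV. snd u $ i)"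
  by (cases u) (simp add: l1norm2_def cone_mem)

lemma l1_add: "u \<in> split_cone A \<Longrightarrow> w \<in> split_cone A \<Longrightarrow> l1norm2 (u + w) = l1norm2 u + l1norm2 w"
  using l1_cone[of u A] l1_cone[of w A] l1_cone[OF cone_add, of u A w]
  by (simp add: sum.distrib)

lemma l1_scale: "l1norm2 (t *\<^sub>R u) = \<bar>t\<bar> * l1norm2 u"
  by (simp add: l1norm2_def abs_mult sum_distrib_left distrib_left)

lemma l1_nonneg: "0 \<le> l1norm2 u"
  by (simp add: l1norm2_def sum_nonneg add_nonneg_nonneg)

lemma l1_pos: assumes "u \<noteq> 0" shows "0 < l1norm2 u"
proof -
  obtain a b where u: "u = (a, b)" by (cases u)
  have s1: "\<bar>a $ i\<bar> \<le> (\<Sum>j\<in>UNIV. \<bar>a $ j\<bar>)" "\<bar>b $ i\<bar> \<le> (\<Sum>j\<in>UNIV. \<bar>b $ j\<bar>)" for i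
    by (rule member_le_sum; simp)+
  have s0: "0 \<le> (\<Sum>j\<in>UNIV. \<bar>a $ j\<bar>)" "0 \<le> (\<Sum>j\<in>UNIV. \<bar>b $ j\<bar>)" by (simp_all add: sum_nonneg)
  from assms obtain i where "a $ i \<noteq> 0 \<or> b $ i \<noteq> 0" unfolding u by (auto simp: zero_prod_def vec_eq_iff)
  then show ?thesis unfolding u l1norm2_def using s1[of i] s0 by auto
qed

lemma P_A_eq: "P_A A = {v \<in> split_cone A. l1norm2 v = 1}"
  by (auto simp: P_A_def split_cone_def)

lemma ext_point:
  fixes A :: "real^'n^'m"
  shows "v extreme_point_of P_A A \<longleftrightarrow> v \<in> P_A A \<and> extdir A v"
proof
  assume X: "v extreme_point_of P_A A"
  then have vP: "v \<in> P_A A" by (simp add: extreme_point_of_def)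
  then have vK: "v \<in> split_cone A" and lv: "l1norm2 v = 1" by (auto simp: P_A_eq)
  have v0: "v \<noteq> 0" using lv by (auto simp: l1norm2_def zero_prod_def)
  have "extdir A v" unfolding extdir_def
  proof (intro conjI allI impI vK v0)
    fix u w assume uK: "u \<in> split_cone A" and wK: "w \<in> split_cone A" and uw: "u + w = v"
    show "\<exists>t\<ge>0. u = t *\<^sub>R v"
    proof (cases "u = 0")
      case True then show ?thesis by (intro exI[of _ 0]) simp
    next
      case u0: False
      show ?thesis
      proof (cases "w = 0")
        case True then show ?thesis using uw by (intro exI[of _ 1]) simp
      next
        case w0: False
        define lu where "lu = l1norm2 u"
        define lw where "lw = l1norm2 w"
        have lup: "lu > 0" "lw > 0" unfolding lu_def lw_def using l1_pos[OF u0] l1_pos[OF w0] by auto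
        have sum1: "lu + lw = 1" unfolding lu_def lw_def using l1_add[OF uK wK] uw lv by simp
        define a where "a = (1/lu) *\<^sub>R u"
        define b where "b = (1/lw) *\<^sub>R w"
        have aP: "a \<in> P_A A" unfolding P_A_eq a_def using uK lup
          by (auto intro: cone_scale simp: l1_scale lu_def)
        have bP: "b \<in> P_A A" unfolding P_A_eq b_def using wK lup
          by (auto intro: cone_scale simp: l1_scale lw_def)
        have ua: "u = lu *\<^sub>R a" "w = lw *\<^sub>R b" unfolding a_def b_def using lup by auto
        show ?thesis
        proof (cases "a = b")
          case True
          then have "v = a" using uw ua sum1 by (metis scaleR_add_left scaleR_one)
          then show ?thesis using ua lup by (intro exI[of _ lu]) auto
        next
          case False
          have "lu = 1 - lw" using sum1 by simp
          then have "v = (1 - lw) *\<^sub>R a + lw *\<^sub>R b" using uw ua by simp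
          moreover have "lw < 1" using sum1 lup by simp
          ultimately have "v \<in> open_segment a b" using False lup by (auto simp: in_segment)
          then show ?thesis using X aP bP unfolding extreme_point_of_def by blast
        qed
      qed
    qed
  qed
  then show "v \<in> P_A A \<and> extdir A v" using vP by blast
next
  assume "v \<in> P_A A \<and> extdir A v"
  then have vP: "v \<in> P_A A" and E: "extdir A v" by auto
  then have vK: "v \<in> split_cone A" and lv: "l1norm2 v = 1" by (auto simp: P_A_eq)
  have ex: "\<And>u w. u \<in> split_cone A \<Longrightarrow> w \<in> split_cone A \<Longrightarrow> u + w = v \<Longrightarrow> (\<exists>t\<ge>0. u = t *\<^sub>R v)"
    using E unfolding extdir_def by blast
  have key: "a = v" if aP: "a \<in> P_A A" and bP: "b \<in> P_A A" and u: "0 < u" "u < 1"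
    and eq: "(1 - u) *\<^sub>R a + u *\<^sub>R b = v" for a b u
  proof -
    have aK: "a \<in> split_cone A" and la: "l1norm2 a = 1" using aP by (auto simp: P_A_eq)
    have bK: "b \<in> split_cone A" using bP by (auto simp: P_A_eq)
    obtain t where t: "(1 - u) *\<^sub>R a = t *\<^sub>R v" and t0: "t \<ge> 0"
      using ex[OF cone_scale[OF aK] cone_scale[OF bK] eq] u by auto
    then have "l1norm2 ((1 - u) *\<^sub>R a) = l1norm2 (t *\<^sub>R v)" by simp
    then have "1 - u = \<bar>t\<bar>" using la lv u by (simp add: l1_scale)
    then have "t = 1 - u" using t0 by simp
    then show "a = v" using t u by simp
  qed
  show "v extreme_point_of P_A A" unfolding extreme_point_of_def
  proof (intro conjI vP ballI notI)
    fix a b assume aP: "a \<in> P_A A" and bP: "b \<in> P_A A" and seg: "v \<in> open_segment a b"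
    then obtain u where u: "0 < u" "u < 1" "v = (1 - u) *\<^sub>R a + u *\<^sub>R b" and ab: "a \<noteq> b"
      by (auto simp: in_segment)
    have "a = v" using key[OF aP bP u(1,2) u(3)[symmetric]] .
    moreover have "b = v" using key[OF bP aP, of "1 - u"] u by (simp add: add.commute)
    ultimately show False using ab by simp
  qed
qed

theorem corollary3:
  fixes A :: "real^'n^'m"
  assumes rational: "\<forall>i j. A $ i $ j \<in> \<rat>"
  shows "\<exists>T'. T' \<subseteq> T_set \<and> card T' \<le> CARD('n)
           \<and> extreme_rays (split_cone A) = ray ` (S_set A \<union> T')
           \<and> {v. v extreme_point_of P_A A} = normalize_l1 ` (S_set A \<union> T')"
proof -
  define T' :: "((real^'n) \<times> (real^'n)) set" where
    "T' = (\<lambda>i. (axis i 1, axis i 1)) ` {i. A *v axis i 1 \<noteq> 0}"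
  define E where "E = S_set A \<union> T'"
  have S_eq: "S_set A = (\<lambda>g. (pos_part g, neg_part g)) ` circuits A"
    by (auto simp: S_set_def pos_part_def neg_part_def)
  have Eext: "extdir A s" if "s \<in> E" for s
  proof -
    { fix g assume "g \<in> circuits A"
      then have "A *v g = 0" "g \<noteq> 0" "\<not> (\<exists>x. A *v x = 0 \<and> x \<noteq> 0 \<and> supp x \<subset> supp g)"
        unfolding circuits_def by auto
      then have "extdir A (pos_part g, neg_part g)" by (rule extdir_circuit) }
    moreover
    { fix i assume "A *v axis i 1 \<noteq> 0"
      then have "extdir A (axis i 1, axis i 1)" by (rule extdir_axis) }
    ultimately show ?thesis using that unfolding E_def S_eq T'_def by blast
  qed
  have Ecov: "\<exists>c>0. \<exists>s\<in>E. r = c *\<^sub>R s" if "extdir A r" for r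
    using extdir_cases[OF rational that] unfolding E_def S_eq T'_def by blast
  have T'sub: "T' \<subseteq> T_set" unfolding T'_def T_set_def by auto
  have cardT: "card T' \<le> CARD('n)"
  proof -
    have "card T' \<le> card {i. A *v axis i 1 \<noteq> 0}" unfolding T'_def by (rule card_image_le) simp
    also have "\<dots> \<le> CARD('n)" by (rule card_mono) auto
    finally show ?thesis .
  qed
  have rays: "extreme_rays (split_cone A) = ray ` E"
    unfolding extreme_rays_eq
  proof safe
    fix r assume "extdir A r"
    then obtain c s where "c > 0" "s \<in> E" "r = c *\<^sub>R s" using Ecov by blast
    then show "ray r \<in> ray ` E" using ray_scale by auto
  next
    fix s assume "s \<in> E"
    then show "\<exists>r. ray s = ray r \<and> extdir A r" using Eext by blast
  qed
  have p1: "v \<in> normalize_l1 ` E" if "v extreme_point_of P_A A" for v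
  proof -
    from that have vP: "v \<in> P_A A" and E1: "extdir A v" by (auto simp: ext_point)
    then have lv: "l1norm2 v = 1" by (auto simp: P_A_eq)
    obtain c s where cs: "c > 0" "s \<in> E" "v = c *\<^sub>R s" using Ecov[OF E1] by blast
    have h: "c * l1norm2 s = 1" using lv cs by (simp add: l1_scale)
    then have "l1norm2 s \<noteq> 0" by auto
    then have "1 / l1norm2 s = c" using h by (simp add: field_simps)
    then have "normalize_l1 s = v" unfolding normalize_l1_def using cs by simp
    then show "v \<in> normalize_l1 ` E" using cs by blast
  qed
  have p2: "normalize_l1 s extreme_point_of P_A A" if sE: "s \<in> E" for s
  proof -
    from sE have Es: "extdir A s" by (rule Eext)
    then have sK: "s \<in> split_cone A" and s0: "s \<noteq> 0" by (auto simp: extdir_def)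
    have lp: "l1norm2 s > 0" using l1_pos[OF s0] .
    have "extdir A (normalize_l1 s)" unfolding normalize_l1_def using Es lp by (intro extdir_scale) auto
    moreover have "normalize_l1 s \<in> P_A A"
      unfolding P_A_eq normalize_l1_def using sK lp by (auto intro: cone_scale simp: l1_scale)
    ultimately show "normalize_l1 s extreme_point_of P_A A" by (simp add: ext_point)
  qed
  have pts: "{v. v extreme_point_of P_A A} = normalize_l1 ` E" using p1 p2 by blast
  show ?thesis using T'sub cardT rays pts unfolding E_def by blast
qed

end
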